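(* Let $\theta,\eta\in[0,\infty)^V$, let $(X(t))_{t\ge0}$ be the solution of $E^{W,\theta,\eta}_V(X)$ driven by the Brownian motion $B$, with hitting times $T$, and let $s\ge0$. Set $$\widetilde W^{(s)}=WK_{s\wedge T}^{-1},\qquad\widetilde\eta^{(s)}=\eta+\widetilde W^{(s)}\big((s\wedge T)\eta\big).$$ Then $(X(t+s))_{t\ge0}$ is (pathwise) the solution of $E^{\widetilde W^{(s)},X(s),\widetilde\eta^{(s)}}_V(X)$ driven by the shifted Brownian motion $(B(s+t)-B(s))_{t\ge0}$; its hitting times are $T-s\wedge T$.
   Context: Let $N\ge1$, $V=\{1,\dots,N\}$, and $W=(W_{i,j})$ a symmetric irreducible matrix with nonnegative entries (diagonal entries may be nonzero). Vectors in $\mathbb R^V$ are identified with diagonal matrices; $K_t=\mathrm{Id}-tW$ for $t\in[0,\infty)^V$; $t\wedge T=(\min(t,T_i))_i$. For a finite set $S$, a symmetric nonnegative matrix $M$ on $S$, and $\vartheta,\kappa\in[0,\infty)^S$, the S.D.E. $E^{M,\vartheta,\kappa}_S(X)$ driven by a standard $|S|$-dimensional Brownian motion $B$ is: $X_i(t)=\vartheta_i+\int_0^t\mathbf 1_{u<T_i}dB_i(u)-\int_0^t\mathbf 1_{u<T_i}((M\psi(u))_i+\kappa_i)du$, $i\in S$, with $T_i=\inf\{t\ge0:X_i(t)=0\}$, $\psi(t)=(\mathrm{Id}-(t\wedge T)M)^{-1}(X(t)+(t\wedge T)\kappa)$; it has a unique pathwise solution for all $t\ge0$. *)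

theory Defs
  imports "HOL-Analysis.Analysis"
begin

text \<open>Index set V is a finite type 'n; vectors are real^'n, matrices real^'n^'n.\<close>

definition dmat :: "real^'n \<Rightarrow> real^'n^'n" where
  "dmat v = (\<chi> i j. if i = j then v $ i else 0)"

definition symmetric_nonneg :: "real^'n^'n \<Rightarrow> bool" where
  "symmetric_nonneg M \<longleftrightarrow> (\<forall>i j. M $ i $ j = M $ j $ i \<and> 0 \<le> M $ i $ j)"

definition irreducible_mat :: "real^'n^'n \<Rightarrow> bool" where
  "irreducible_mat M \<longleftrightarrow>
     (\<forall>i j. i \<noteq> j \<longrightarrow> (i, j) \<in> {(a, b). 0 < M $ a $ b}\<^sup>+)"

text \<open>Hitting time of 0 of coordinate i (Inf of the empty set is \<infinity>).\<close>
definition hit :: "(real \<Rightarrow> real^'n) \<Rightarrow> 'n \<Rightarrow> ereal" where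
  "hit X i = Inf {ereal t | t. 0 \<le> t \<and> X t $ i = 0}"

definition tmin :: "real \<Rightarrow> ('n \<Rightarrow> ereal) \<Rightarrow> real^'n" where
  "tmin t T = (\<chi> i. real_of_ereal (min (ereal t) (T i)))"

definition Kmat :: "real^'n^'n \<Rightarrow> real^'n \<Rightarrow> real^'n^'n" where
  "Kmat M v = mat 1 - dmat v ** M"

definition psi :: "real^'n^'n \<Rightarrow> real^'n \<Rightarrow> (real \<Rightarrow> real^'n) \<Rightarrow> real \<Rightarrow> real^'n" where
  "psi M \<kappa> X t =
     matrix_inv (Kmat M (tmin t (hit X))) *v (X t + dmat (tmin t (hit X)) *v \<kappa>)"

text \<open>X solves E^{M,th0,\<kappa>} driven by the path B (pathwise). The stochastic integral
  of the indicator 1_{u<T_i} against dB_i equals B_i(t\<and>T_i) - B_i(0).\<close>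
definition sde_solution ::
  "real^'n^'n \<Rightarrow> real^'n \<Rightarrow> real^'n \<Rightarrow> (real \<Rightarrow> real^'n) \<Rightarrow> (real \<Rightarrow> real^'n) \<Rightarrow> bool" where
  "sde_solution M th0 \<kappa> B X \<longleftrightarrow>
     symmetric_nonneg M \<and> (\<forall>i. 0 \<le> th0 $ i \<and> 0 \<le> \<kappa> $ i) \<and>
     continuous_on {0..} X \<and>
     (\<forall>t\<ge>0. invertible (Kmat M (tmin t (hit X)))) \<and>
     (\<forall>t\<ge>0. \<forall>i.
        (\<lambda>u. if ereal u < hit X i then (M *v psi M \<kappa> X u) $ i + \<kappa> $ i else 0)
           integrable_on {0..t} \<and>
        X t $ i = th0 $ i + (B (tmin t (hit X) $ i) $ i - B 0 $ i)
          - integral {0..t}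
              (\<lambda>u. if ereal u < hit X i then (M *v psi M \<kappa> X u) $ i + \<kappa> $ i else 0))"

end

theory Submission
  imports Defs
begin


lemma mm_sub_r: "((A::real^'n^'n) - B) ** C = A ** C - B ** C"
  by (simp add: matrix_matrix_mult_def vec_eq_iff algebra_simps sum_subtractf)
lemma mm_sub_l: "(A::real^'n^'n) ** (B - C) = A ** B - A ** C"
  by (simp add: matrix_matrix_mult_def vec_eq_iff algebra_simps sum_subtractf)
lemma mm_add_r: "((A::real^'n^'n) + B) ** C = A ** C + B ** C"
  by (simp add: matrix_matrix_mult_def vec_eq_iff algebra_simps sum.distrib)
lemma dmat_add: "dmat (a + b) = dmat a + dmat b"
  by (simp add: dmat_def vec_eq_iff)
lemma dmat_diff: "dmat (a - b) = dmat a - dmat b"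
  by (simp add: dmat_def vec_eq_iff)
lemma dmat_zero: "dmat 0 = 0"
  by (simp add: dmat_def vec_eq_iff)
lemma dmat_mul_nth: "(dmat d ** W) $ i $ j = d $ i * W $ i $ j"
proof -
  have "(dmat d ** W) $ i $ j = (\<Sum>k\<in>UNIV. (if i = k then d $ i else 0) * W $ k $ j)"
    by (simp add: matrix_matrix_mult_def dmat_def)
  also have "\<dots> = (\<Sum>k\<in>UNIV. if k = i then d $ i * W $ i $ j else 0)"
    by (rule sum.cong) auto
  also have "\<dots> = d $ i * W $ i $ j" by simp
  finally show ?thesis .
qed
lemma dmat_vec: "(dmat d *v x) $ i = d $ i * x $ i"
proof -
  have "(dmat d *v x) $ i = (\<Sum>k\<in>UNIV. (if i = k then d $ i else 0) * x $ k)"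
    by (simp add: matrix_vector_mult_def dmat_def)
  also have "\<dots> = (\<Sum>k\<in>UNIV. if k = i then d $ i * x $ i else 0)"
    by (rule sum.cong) auto
  also have "\<dots> = d $ i * x $ i" by simp
  finally show ?thesis .
qed

lemma inv_props:
  assumes "invertible (A::real^'n^'n)"
  shows "A ** matrix_inv A = mat 1" "matrix_inv A ** A = mat 1"
proof -
  obtain B where "A ** B = mat 1 \<and> B ** A = mat 1" using assms by (auto simp: invertible_def)
  then have "A ** matrix_inv A = mat 1 \<and> matrix_inv A ** A = mat 1"
    unfolding matrix_inv_def by (rule someI)
  then show "A ** matrix_inv A = mat 1" "matrix_inv A ** A = mat 1" by auto
qed

lemma inv_unique:
  assumes "(A::real^'n^'n) ** B = mat 1"
  shows "matrix_inv A = B"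
proof -
  have inv: "invertible A" using assms matrix_left_right_inverse1 invertible_def by blast
  have "matrix_inv A = matrix_inv A ** (A ** B)" using assms by (simp add: matrix_mul_rid)
  also have "\<dots> = B" using inv_props(2)[OF inv] by (simp add: matrix_mul_assoc matrix_mul_lid)
  finally show ?thesis .
qed

definition mn :: "real^'n^'n \<Rightarrow> real" where
  "mn A = (\<Sum>i\<in>UNIV. \<Sum>j\<in>UNIV. \<bar>A $ i $ j\<bar>)"
definition nn :: "real^'n^'n \<Rightarrow> bool" where
  "nn A \<longleftrightarrow> (\<forall>i j. 0 \<le> A $ i $ j)"

lemma mn_ge0: "0 \<le> mn A" by (simp add: mn_def sum_nonneg)
lemma mn_entry: "\<bar>A $ i $ j\<bar> \<le> mn A"
proof -
  have "\<bar>A $ i $ j\<bar> \<le> (\<Sum>j\<in>UNIV. \<bar>A $ i $ j\<bar>)"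
    by (rule member_le_sum) auto
  also have "\<dots> \<le> mn A" unfolding mn_def
    by (rule member_le_sum[where f="\<lambda>i. \<Sum>j\<in>UNIV. \<bar>A $ i $ j\<bar>"]) (auto intro: sum_nonneg)
  finally show ?thesis .
qed
lemma mn_add: "mn (A + B) \<le> mn A + mn B"
  unfolding mn_def by (simp add: sum.distrib[symmetric] sum_mono abs_triangle_ineq)
lemma mn_mult: "mn (A ** B) \<le> mn A * mn B"
proof -
  have "mn (A ** B) = (\<Sum>i\<in>UNIV. \<Sum>k\<in>UNIV. \<bar>\<Sum>j\<in>UNIV. A $ i $ j * B $ j $ k\<bar>)"
    by (simp add: mn_def matrix_matrix_mult_def)
  also have "\<dots> \<le> (\<Sum>i\<in>UNIV. \<Sum>k\<in>UNIV. \<Sum>j\<in>UNIV. \<bar>A $ i $ j\<bar> * \<bar>B $ j $ k\<bar>)"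
  proof (intro sum_mono)
    fix i k
    have "\<bar>\<Sum>j\<in>UNIV. A $ i $ j * B $ j $ k\<bar> \<le> (\<Sum>j\<in>UNIV. \<bar>A $ i $ j * B $ j $ k\<bar>)"
      by (rule sum_abs)
    then show "\<bar>\<Sum>j\<in>UNIV. A $ i $ j * B $ j $ k\<bar> \<le> (\<Sum>j\<in>UNIV. \<bar>A $ i $ j\<bar> * \<bar>B $ j $ k\<bar>)"
      by (simp add: abs_mult)
  qed
  also have "\<dots> = (\<Sum>i\<in>UNIV. \<Sum>j\<in>UNIV. \<bar>A $ i $ j\<bar> * (\<Sum>k\<in>UNIV. \<bar>B $ j $ k\<bar>))"
    by (rule sum.cong[OF refl]) (simp only: sum_distrib_left, rule sum.swap)
  also have "\<dots> \<le> (\<Sum>i\<in>UNIV. \<Sum>j\<in>UNIV. \<bar>A $ i $ j\<bar> * mn B)"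
  proof (intro sum_mono mult_left_mono)
    fix j
    show "(\<Sum>k\<in>UNIV. \<bar>B $ j $ k\<bar>) \<le> mn B" unfolding mn_def
      by (rule member_le_sum[where f="\<lambda>i. \<Sum>j\<in>UNIV. \<bar>B $ i $ j\<bar>"]) (auto intro: sum_nonneg)
  qed auto
  also have "\<dots> = mn A * mn B" by (simp add: mn_def sum_distrib_right)
  finally show ?thesis .
qed
lemma mn_dmat:
  assumes "\<And>i. 0 \<le> e $ i \<and> e $ i \<le> h"
  shows "mn (dmat e ** W) \<le> h * mn W"
proof -
  have "mn (dmat e ** W) = (\<Sum>i\<in>UNIV. \<Sum>j\<in>UNIV. \<bar>e $ i\<bar> * \<bar>W $ i $ j\<bar>)"
    by (simp add: mn_def dmat_mul_nth abs_mult)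
  also have "\<dots> \<le> (\<Sum>i\<in>UNIV. \<Sum>j\<in>UNIV. h * \<bar>W $ i $ j\<bar>)"
    using assms by (intro sum_mono mult_right_mono) auto
  also have "\<dots> = h * mn W" by (simp add: mn_def sum_distrib_left)
  finally show ?thesis .
qed
lemma nn_mult: "nn A \<Longrightarrow> nn B \<Longrightarrow> nn (A ** B)"
  by (auto simp: nn_def matrix_matrix_mult_def intro!: sum_nonneg)
lemma nn_add: "nn A \<Longrightarrow> nn B \<Longrightarrow> nn (A + B)"
  by (auto simp: nn_def)

lemma lemmaP:
  assumes "nn N" "nn F" "mn (N ** F) < 1" "N' = N + (N ** F) ** N'"
  shows "nn N'"
proof -
  define Q where "Q = N ** F"
  define q where "q = mn Q"
  have q0: "0 \<le> q" by (simp add: q_def mn_ge0)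
  have q1: "q < 1" using assms(3) by (simp add: q_def Q_def)
  have nQ: "nn Q" using assms by (simp add: Q_def nn_mult)
  have step: "\<exists>S R. nn S \<and> nn R \<and> N' = S + R ** N' \<and> mn R \<le> q ^ Suc k" for k
  proof (induction k)
    case 0
    show ?case using assms nQ by (intro exI[of _ N] exI[of _ Q]) (auto simp: q_def Q_def)
  next
    case (Suc k)
    then obtain S R where SR: "nn S" "nn R" "N' = S + R ** N'" "mn R \<le> q ^ Suc k" by blast
    have "N' = S + R ** (N + Q ** N')" using SR(3) assms(4) Q_def by metis
    also have "\<dots> = (S + R ** N) + (R ** Q) ** N'"
      by (simp add: matrix_add_ldistrib matrix_mul_assoc add.assoc)
    finally have e: "N' = (S + R ** N) + (R ** Q) ** N'" .
    have "mn (R ** Q) \<le> mn R * q" using mn_mult[of R Q] q_def by simp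
    also have "\<dots> \<le> q ^ Suc k * q" using SR(4) q0 by (rule mult_right_mono)
    finally have "mn (R ** Q) \<le> q ^ Suc (Suc k)" by (simp add: mult.commute)
    then show ?case using e SR assms nQ
      by (intro exI[of _ "S + R ** N"] exI[of _ "R ** Q"]) (auto intro: nn_add nn_mult)
  qed
  show ?thesis unfolding nn_def
  proof (intro allI, rule ccontr)
    fix i j
    assume neg: "\<not> 0 \<le> N' $ i $ j"
    have c: "0 < mn N'" using mn_entry[of N' i j] neg by linarith
    have "0 < - N' $ i $ j / mn N'" by (intro divide_pos_pos) (use neg c in auto)
    then obtain k where k: "q ^ k < - N' $ i $ j / mn N'" using real_arch_pow_inv q1 by blast
    obtain S R where SR: "nn S" "nn R" "N' = S + R ** N'" "mn R \<le> q ^ Suc k" using step by blast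
    have "N' $ i $ j = S $ i $ j + (R ** N') $ i $ j" using SR(3) by (metis vector_add_component)
    moreover have "- mn (R ** N') \<le> (R ** N') $ i $ j" using mn_entry[of "R ** N'" i j] by linarith
    moreover have "mn (R ** N') \<le> q ^ Suc k * mn N'"
      using mn_mult[of R N'] SR(4) mult_right_mono[OF SR(4) mn_ge0[of N']] by linarith
    moreover have "q ^ Suc k \<le> q ^ k" using q0 q1 by (simp add: mult_left_le_one_le)
    moreover have "q ^ k * mn N' < - N' $ i $ j"
    proof -
      have "q ^ k * mn N' < (- N' $ i $ j / mn N') * mn N'" by (rule mult_strict_right_mono[OF k c])
      then show ?thesis using c by simp
    qed
    moreover have "0 \<le> S $ i $ j" using SR(1) nn_def by blast
    ultimately have "q ^ Suc k * mn N' < q ^ Suc k * mn N'"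
      using mult_right_mono[OF \<open>q ^ Suc k \<le> q ^ k\<close> mn_ge0[of N']] by linarith
    then show False by simp
  qed
qed


lemma ident:
  fixes K1 K2 F N1 N2 :: "real^'n^'n"
  assumes "K1 = K2 + F" "N1 ** K1 = mat 1" "K2 ** N2 = mat 1"
  shows "N2 = N1 + N1 ** F ** N2"
proof -
  have "N2 = N1 ** K1 ** N2" using assms(2) by (simp add: matrix_mul_lid)
  also have "\<dots> = N1 ** K2 ** N2 + N1 ** F ** N2"
    using assms(1) by (simp add: matrix_add_ldistrib mm_add_r)
  also have "N1 ** K2 ** N2 = N1" using assms(3) by (simp add: matrix_mul_assoc[symmetric] matrix_mul_rid)
  finally show ?thesis .
qed

lemma Kdecomp:
  "mat 1 - dmat a ** W = (mat 1 - dmat b ** W) + dmat (b - a) ** (W::real^'n^'n)"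
  by (simp add: dmat_diff mm_sub_r)

lemma path_nonneg:
  fixes W :: "real^'n^'n" and d :: "real \<Rightarrow> real^'n"
  assumes Wnn: "nn W"
  and d0: "d 0 = 0"
  and dinc: "\<And>t t' i. 0 \<le> t \<Longrightarrow> t \<le> t' \<Longrightarrow> 0 \<le> d t' $ i - d t $ i \<and> d t' $ i - d t $ i \<le> t' - t"
  and inv: "\<And>t. 0 \<le> t \<Longrightarrow> invertible (mat 1 - dmat (d t) ** W)"
  and t: "0 \<le> t"
  shows "nn (matrix_inv (mat 1 - dmat (d t) ** W))"
proof (rule ccontr)
  define K where "K t = mat 1 - dmat (d t) ** W" for t
  define N where "N t = matrix_inv (K t)" for t
  have NK: "N t ** K t = mat 1" "K t ** N t = mat 1" if "0 \<le> t" for t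
    using inv_props[OF inv[OF that]] by (auto simp: N_def K_def)
  have Fnn: "nn (dmat (d b - d a) ** W)" if "0 \<le> a" "a \<le> b" for a b
    using dinc[OF that] Wnn by (auto simp: nn_def dmat_mul_nth)
  have Fmn: "mn (dmat (d b - d a) ** W) \<le> (b - a) * mn W" if "0 \<le> a" "a \<le> b" for a b
    using dinc[OF that] by (intro mn_dmat) auto
  have Id: "N b = N a + N a ** (dmat (d b - d a) ** W) ** N b" if "0 \<le> a" "a \<le> b" for a b
  proof (rule ident[of "K a" "K b" _ "N a" "N b"])
    show "K a = K b + dmat (d b - d a) ** W" unfolding K_def by (rule Kdecomp)
  qed (use NK that in auto)
  define bad where "bad = {t. 0 \<le> t \<and> \<not> nn (N t)}"
  assume "\<not> nn (matrix_inv (mat 1 - dmat (d t) ** W))"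
  then have "t \<in> bad" using t by (simp add: bad_def N_def K_def)
  then have ne: "bad \<noteq> {}" by auto
  have bdd: "bdd_below bad" by (auto simp: bad_def bdd_below_def)
  define \<tau> where "\<tau> = Inf bad"
  have tau0: "0 \<le> \<tau>" unfolding \<tau>_def using ne by (intro cInf_greatest) (auto simp: bad_def)
  have below: "nn (N r)" if "0 \<le> r" "r < \<tau>" for r
  proof (rule ccontr)
    assume "\<not> nn (N r)"
    then have "r \<in> bad" using that by (simp add: bad_def)
    then have "\<tau> \<le> r" unfolding \<tau>_def using bdd by (rule cInf_lower)
    then show False using that by simp
  qed
  define C where "C = mn (N \<tau>)"
  define w where "w = mn W"
  have C0: "0 \<le> C" and w0: "0 \<le> w" by (simp_all add: C_def w_def mn_ge0)
  define h where "h = 1 / (4 * (C + 1) * (w + 1))"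
  have h0: "0 < h" using C0 w0 by (simp add: h_def)
  have hwC: "h * w * C \<le> 1/4"
  proof -
    have "h * w * C = (w * C) / (4 * ((C + 1) * (w + 1)))" by (simp add: h_def)
    also have "\<dots> \<le> ((w + 1) * (C + 1)) / (4 * ((C + 1) * (w + 1)))"
      using C0 w0 by (intro divide_right_mono mult_mono) auto
    also have "\<dots> = 1/4" using C0 w0 by simp
    finally show ?thesis .
  qed
  have nntau: "nn (N \<tau>)"
  proof (cases "\<tau> = 0")
    case True
    have "K 0 = mat 1" by (simp add: K_def d0 dmat_zero)
    then have "N 0 = mat 1" by (simp add: N_def inv_unique matrix_mul_lid)
    then show ?thesis using True by (simp add: nn_def mat_def)
  next
    case False
    then have tp: "0 < \<tau>" using tau0 by simp
    define r where "r = \<tau> - min h (\<tau>/2)"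
    have r0: "0 \<le> r" and rt: "r < \<tau>" and rh: "\<tau> - r \<le> h"
      using h0 tp by (auto simp: r_def min_def)
    define F where "F = dmat (d \<tau> - d r) ** W"
    have Fm: "mn F \<le> h * w"
    proof -
      have "mn F \<le> (\<tau> - r) * w" using Fmn[OF r0] rt by (simp add: F_def w_def)
      also have "\<dots> \<le> h * w" using rh w0 by (rule mult_right_mono)
      finally show ?thesis .
    qed
    have I: "N \<tau> = N r + N r ** F ** N \<tau>" using Id[OF r0] rt by (simp add: F_def)
    have "mn (N r) \<le> 2 * C"
    proof -
      have "N r = N \<tau> - N r ** F ** N \<tau>" using I by (simp add: algebra_simps)
      then have "mn (N r) \<le> mn (N \<tau>) + mn (N r ** F ** N \<tau>)"
        using mn_add[of "N \<tau>" "- (N r ** F ** N \<tau>)"] by (simp add: mn_def)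
      also have "mn (N r ** F ** N \<tau>) \<le> mn (N r) * mn F * C"
        using mn_mult[of "N r ** F" "N \<tau>"] mn_mult[of "N r" F] C_def
        by (metis mn_ge0 mult_right_mono order_trans)
      also have "\<dots> \<le> mn (N r) * (h * w) * C"
        using Fm C0 mn_ge0[of "N r"] by (intro mult_right_mono mult_left_mono) auto
      finally have "mn (N r) \<le> C + mn (N r) * (h * w * C)" by (simp add: C_def mult.assoc)
      moreover have "mn (N r) * (h * w * C) \<le> mn (N r) * (1/4)"
        using hwC mn_ge0[of "N r"] by (rule mult_left_mono)
      ultimately show ?thesis using C0 by linarith
    qed
    have "mn (N r ** F) \<le> 2 * C * (h * w)"
      using mn_mult[of "N r" F] \<open>mn (N r) \<le> 2 * C\<close> Fm mn_ge0[of F] C0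
      by (meson mult_mono order_trans mn_ge0)
    also have "\<dots> \<le> 1/2" using hwC by (simp add: algebra_simps)
    finally have "mn (N r ** F) < 1" by simp
    moreover have "nn F" using Fnn[OF r0] rt by (simp add: F_def)
    ultimately show ?thesis using lemmaP[OF below[OF r0 rt] _ _ I] by simp
  qed
  have above: "nn (N t')" if "\<tau> \<le> t'" "t' \<le> \<tau> + h" for t'
  proof -
    define F where "F = dmat (d t' - d \<tau>) ** W"
    have I: "N t' = N \<tau> + N \<tau> ** F ** N t'" using Id[OF tau0 that(1)] by (simp add: F_def)
    have Fm: "mn F \<le> h * w"
    proof -
      have "mn F \<le> (t' - \<tau>) * w" using Fmn[OF tau0 that(1)] by (simp add: F_def w_def)
      also have "\<dots> \<le> h * w" using that w0 by (intro mult_right_mono) auto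
      finally show ?thesis .
    qed
    have "mn (N \<tau> ** F) \<le> C * (h * w)"
      using mn_mult[of "N \<tau>" F] Fm C0 by (metis C_def mult_left_mono order_trans)
    also have "\<dots> \<le> 1/4" using hwC by (simp add: algebra_simps)
    finally have "mn (N \<tau> ** F) < 1" by simp
    moreover have "nn F" using Fnn[OF tau0 that(1)] by (simp add: F_def)
    ultimately show ?thesis using lemmaP[OF nntau _ _ I] by simp
  qed
  obtain b where b: "b \<in> bad" "b < \<tau> + h" using cInf_lessD[OF ne, of "\<tau> + h"] h0 \<tau>_def by auto
  have "\<tau> \<le> b" unfolding \<tau>_def using cInf_lower[OF b(1) bdd] .
  then have "nn (N b)" using above b by simp
  then show False using b(1) by (simp add: bad_def)
qed


definition mr :: "real \<Rightarrow> ereal \<Rightarrow> real" where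
  "mr t x = real_of_ereal (min (ereal t) x)"

lemma tmin_nth: "tmin t T $ i = mr t (T i)"
  by (simp add: tmin_def mr_def)

lemma mr_bounds: "0 \<le> x \<Longrightarrow> 0 \<le> t \<Longrightarrow> 0 \<le> mr t x \<and> mr t x \<le> t"
  by (cases x) (auto simp: mr_def min_def)

lemma mr_mono: "0 \<le> x \<Longrightarrow> 0 \<le> t \<Longrightarrow> t \<le> t' \<Longrightarrow> 0 \<le> mr t' x - mr t x \<and> mr t' x - mr t x \<le> t' - t"
  by (cases x) (auto simp: mr_def min_def)

lemma mr_zero: "0 \<le> x \<Longrightarrow> mr 0 x = 0"
  by (cases x) (auto simp: mr_def min_def)

lemma hit_ge0: "0 \<le> hit X i"
  unfolding hit_def by (rule Inf_greatest) auto

lemma hit_le: "0 \<le> t \<Longrightarrow> X t $ i = 0 \<Longrightarrow> hit X i \<le> ereal t"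
  unfolding hit_def by (rule Inf_lower) auto

lemma hit_lower: "(\<And>t. 0 \<le> t \<Longrightarrow> X t $ i = 0 \<Longrightarrow> c \<le> ereal t) \<Longrightarrow> c \<le> hit X i"
  unfolding hit_def by (rule Inf_greatest) auto

lemma hit_attained:
  assumes cont: "continuous_on {0..} X" and fin: "hit X i \<noteq> \<infinity>"
  shows "\<exists>r. hit X i = ereal r \<and> 0 \<le> r \<and> X r $ i = 0"
proof -
  define Z where "Z = {t \<in> {0..}. X t $ i = 0}"
  have cl: "closed Z" unfolding Z_def
    by (rule continuous_closed_preimage_constant) (auto intro: continuous_on_component cont)
  have ne: "Z \<noteq> {}"
  proof
    assume "Z = {}"
    then have e: "{ereal t | t. 0 \<le> t \<and> X t $ i = 0} = {}" by (auto simp: Z_def)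
    have "hit X i = Inf {}" unfolding hit_def e ..
    then have "hit X i = \<infinity>" by (simp add: top_ereal_def)
    then show False using fin by simp
  qed
  have bdd: "bdd_below Z" by (auto simp: Z_def bdd_below_def)
  have mem: "Inf Z \<in> Z" using closed_contains_Inf[OF ne bdd cl] .
  have "hit X i = ereal (Inf Z)"
  proof (rule antisym)
    show "hit X i \<le> ereal (Inf Z)" using mem by (intro hit_le) (auto simp: Z_def)
    show "ereal (Inf Z) \<le> hit X i"
      by (rule hit_lower) (use bdd in \<open>auto simp: Z_def intro!: cInf_lower\<close>)
  qed
  then show ?thesis using mem by (auto simp: Z_def)
qed

lemma sde_eq:
  assumes "sde_solution M th0 \<kappa> B X" "0 \<le> t"
  shows "X t $ i = th0 $ i + (B (tmin t (hit X) $ i) $ i - B 0 $ i)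
          - integral {0..t}
              (\<lambda>u. if ereal u < hit X i then (M *v psi M \<kappa> X u) $ i + \<kappa> $ i else 0)"
    and "(\<lambda>u. if ereal u < hit X i then (M *v psi M \<kappa> X u) $ i + \<kappa> $ i else 0)
           integrable_on {0..t}"
  using assms unfolding sde_solution_def by blast+

lemma stays_zero:
  assumes sol: "sde_solution M th0 \<kappa> B X" and h: "hit X i = ereal r" and rt: "r \<le> t"
    and cont: "continuous_on {0..} X"
  shows "X t $ i = 0"
proof -
  have "hit X i \<noteq> \<infinity>" using h by simp
  from hit_attained[OF cont this] obtain r' where r': "hit X i = ereal r'" "0 \<le> r'" "X r' $ i = 0"
    by blast
  have rr: "r' = r" using r' h by simp
  have r0: "0 \<le> r" using r' rr by simp
  define f where "f = (\<lambda>u. if ereal u < hit X i then (M *v psi M \<kappa> X u) $ i + \<kappa> $ i else 0)"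
  have int: "f integrable_on {0..t}" using sde_eq(2)[OF sol, of t] r0 rt by (simp add: f_def)
  have z: "integral {r..t} f = 0"
  proof -
    have "integral {r..t} f = integral {r..t} (\<lambda>u. 0::real)"
      by (rule integral_cong) (auto simp: f_def h)
    then show ?thesis by simp
  qed
  have comb: "integral {0..r} f + integral {r..t} f = integral {0..t} f"
    by (rule Henstock_Kurzweil_Integration.integral_combine[OF r0 rt int])
  have tm: "tmin t (hit X) $ i = r" "tmin r (hit X) $ i = r"
    using rt by (auto simp: tmin_nth mr_def h min_def)
  have "X t $ i = X r $ i"
    using sde_eq(1)[OF sol, of t i] sde_eq(1)[OF sol, of r i] r0 rt tm comb z
    by (simp add: f_def)
  then show ?thesis using r' rr by simp
qed

lemma X_nonneg:
  assumes sol: "sde_solution M th0 \<kappa> B X" and cont: "continuous_on {0..} X" and s: "0 \<le> s"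
  shows "0 \<le> X s $ i"
proof (rule ccontr)
  assume neg: "\<not> 0 \<le> X s $ i"
  have X0: "X 0 $ i = th0 $ i"
    using sde_eq(1)[OF sol, of 0 i] hit_ge0[of X i] by (simp add: tmin_nth mr_zero)
  have th: "0 \<le> th0 $ i" using sol by (simp add: sde_solution_def)
  have "continuous_on {0..s} (\<lambda>t. X t $ i)"
    by (intro continuous_on_component continuous_on_subset[OF cont]) auto
  then obtain u where u: "0 \<le> u" "u \<le> s" "X u $ i = 0"
    using IVT2'[of "\<lambda>t. X t $ i" s 0 0] neg X0 th s by auto
  have "hit X i \<le> ereal u" using hit_le u by blast
  then obtain r where r: "hit X i = ereal r" "r \<le> u"
    using hit_ge0[of X i] by (cases "hit X i") auto
  have "X s $ i = 0" using stays_zero[OF sol r(1) _ cont] r u by simp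
  then show False using neg by simp
qed

lemma hit_shift:
  assumes sol: "sde_solution M th0 \<kappa> B X" and cont: "continuous_on {0..} X" and s: "0 \<le> s"
  shows "hit (\<lambda>t. X (t + s)) i = hit X i - min (ereal s) (hit X i)"
proof (cases "hit X i \<le> ereal s")
  case True
  then obtain r where r: "hit X i = ereal r" "r \<le> s"
    using hit_ge0[of X i] by (cases "hit X i") auto
  have "X (0 + s) $ i = 0" using stays_zero[OF sol r(1) _ cont] r by simp
  then have "hit (\<lambda>t. X (t + s)) i \<le> 0" using hit_le[of 0 "\<lambda>t. X (t + s)" i] by (simp add: zero_ereal_def)
  then have "hit (\<lambda>t. X (t + s)) i = 0" using hit_ge0[of "\<lambda>t. X (t + s)" i] by simp
  then show ?thesis using r by (simp add: min_def)
next
  case False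
  then have mn: "min (ereal s) (hit X i) = ereal s" by simp
  show ?thesis
  proof (cases "hit X i = \<infinity>")
    case True
    have "hit (\<lambda>t. X (t + s)) i = \<infinity>"
    proof (rule ccontr)
      assume ni: "hit (\<lambda>t. X (t + s)) i \<noteq> \<infinity>"
      have cs: "continuous_on {0..} (\<lambda>t. X (t + s))"
        by (rule continuous_on_compose2[OF cont]) (use s in \<open>auto intro!: continuous_intros\<close>)
      from hit_attained[OF cs ni] obtain r where "0 \<le> r" "X (r + s) $ i = 0"
        by blast
      then have "hit X i \<le> ereal (r + s)" using s by (intro hit_le) auto
      then show False using True by simp
    qed
    then show ?thesis using True mn by simp
  next
    case fin: False
    obtain r where r: "hit X i = ereal r" "0 \<le> r" "X r $ i = 0" using hit_attained[OF cont fin] by auto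
    have rs: "s < r" using False r by simp
    have "hit (\<lambda>t. X (t + s)) i = ereal (r - s)"
    proof (rule antisym)
      show "hit (\<lambda>t. X (t + s)) i \<le> ereal (r - s)" using r rs by (intro hit_le) auto
      show "ereal (r - s) \<le> hit (\<lambda>t. X (t + s)) i"
      proof (rule hit_lower)
        fix t assume "0 \<le> t" "X (t + s) $ i = 0"
        then have "hit X i \<le> ereal (t + s)" using s by (intro hit_le) auto
        then show "ereal (r - s) \<le> ereal t" using r by simp
      qed
    qed
    then show ?thesis using r mn by simp
  qed
qed


lemma alg_main:
  fixes W N0 K0 K N :: "real^'n^'n" and d0 \<delta> \<eta> x :: "real^'n"
  assumes K0: "K0 = Kmat W d0" and K: "K = Kmat W (d0 + \<delta>)"
    and K0N0: "K0 ** N0 = mat 1" and N0K0: "N0 ** K0 = mat 1"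
    and KN: "K ** N = mat 1" and NK: "N ** K = mat 1"
  shows "Kmat (W ** N0) \<delta> = K ** N0"
    and "Kmat (W ** N0) \<delta> ** (K0 ** N) = mat 1"
    and "(W ** N0) *v ((K0 ** N) *v (x + dmat \<delta> *v (\<eta> + (W ** N0) *v (dmat d0 *v \<eta>))))
          + (\<eta> + (W ** N0) *v (dmat d0 *v \<eta>))
         = W *v (N *v (x + dmat (d0 + \<delta>) *v \<eta>)) + \<eta>"
proof -
  have "K ** N0 = (K0 - dmat \<delta> ** W) ** N0"
    by (simp add: K K0 Kmat_def dmat_add mm_add_r algebra_simps)
  also have "\<dots> = mat 1 - dmat \<delta> ** W ** N0"
    by (simp add: mm_sub_r K0N0 matrix_mul_assoc)
  finally show A: "Kmat (W ** N0) \<delta> = K ** N0"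
    by (simp add: Kmat_def matrix_mul_assoc)
  show "Kmat (W ** N0) \<delta> ** (K0 ** N) = mat 1"
    unfolding A
    by (metis KN N0K0 matrix_mul_assoc matrix_mul_lid)
  have K0K: "K0 = K + dmat \<delta> ** W"
    by (simp add: K K0 Kmat_def dmat_add mm_add_r algebra_simps)
  have M1: "N ** dmat \<delta> ** W ** N0 + N0 = N"
  proof -
    have "N0 = N ** K ** N0" by (simp add: NK matrix_mul_lid)
    then have "N ** dmat \<delta> ** W ** N0 + N0 = N ** (dmat \<delta> ** W + K) ** N0"
      by (simp add: matrix_add_ldistrib mm_add_r matrix_mul_assoc)
    also have "\<dots> = N ** K0 ** N0" using K0K by (simp add: add.commute)
    also have "\<dots> = N" by (simp add: K0N0 matrix_mul_assoc[symmetric] matrix_mul_rid)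
    finally show ?thesis .
  qed
  have WN: "W ** N0 ** (K0 ** N) = W ** N"
    by (metis N0K0 matrix_mul_assoc matrix_mul_rid)
  have NKY: "N0 ** (K0 ** Y) = Y" for Y
    by (simp add: matrix_mul_assoc N0K0 matrix_mul_lid)
  have M2: "W ** N ** dmat \<delta> ** W ** N0 ** dmat d0 + W ** N0 ** dmat d0 = W ** N ** dmat d0"
  proof -
    have "W ** N ** dmat \<delta> ** W ** N0 ** dmat d0 + W ** N0 ** dmat d0
          = W ** (N ** dmat \<delta> ** W ** N0 + N0) ** dmat d0"
      by (simp add: matrix_add_ldistrib mm_add_r matrix_mul_assoc)
    then show ?thesis using M1 by simp
  qed
  have "(W ** N0) *v ((K0 ** N) *v (x + dmat \<delta> *v (\<eta> + (W ** N0) *v (dmat d0 *v \<eta>))))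
          + (\<eta> + (W ** N0) *v (dmat d0 *v \<eta>))
        = (W ** N) *v x + (W ** N ** dmat \<delta>) *v \<eta>
          + (W ** N ** dmat \<delta> ** W ** N0 ** dmat d0 + W ** N0 ** dmat d0) *v \<eta> + \<eta>"
    by (simp add: matrix_vector_mul_assoc matrix_vector_right_distrib matrix_vector_mult_add_rdistrib
        WN NKY matrix_mul_assoc[symmetric] algebra_simps)
  also have "\<dots> = W *v (N *v (x + dmat (d0 + \<delta>) *v \<eta>)) + \<eta>"
    unfolding M2
    by (simp add: matrix_vector_mul_assoc matrix_vector_right_distrib matrix_vector_mult_add_rdistrib
        dmat_add matrix_add_ldistrib matrix_mul_assoc algebra_simps)
  finally show "(W ** N0) *v ((K0 ** N) *v (x + dmat \<delta> *v (\<eta> + (W ** N0) *v (dmat d0 *v \<eta>))))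
          + (\<eta> + (W ** N0) *v (dmat d0 *v \<eta>))
         = W *v (N *v (x + dmat (d0 + \<delta>) *v \<eta>)) + \<eta>" .
qed


abbreviation tr :: "real^'n^'n \<Rightarrow> real^'n^'n" where "tr \<equiv> Finite_Cartesian_Product.transpose"

lemma tr_nth: "tr A $ i $ j = A $ j $ i"
  by (simp add: Finite_Cartesian_Product.transpose_def)
lemma tr_diff: "tr (A - B) = tr A - tr B"
  by (simp add: vec_eq_iff tr_nth)
lemma tr_dmat: "tr (dmat d) = dmat d"
  by (simp add: vec_eq_iff tr_nth dmat_def)

lemma sym_lemma:
  fixes W N0 :: "real^'n^'n"
  assumes sym: "tr W = W" and K0N0: "(mat 1 - dmat d ** W) ** N0 = mat 1"
  shows "tr (W ** N0) = W ** N0"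
proof -
  define K0 where "K0 = mat 1 - dmat d ** W"
  have tK: "tr K0 = mat 1 - W ** dmat d"
    by (simp add: K0_def tr_diff matrix_transpose_mul sym tr_dmat)
  have c: "tr K0 ** W = W ** K0"
    unfolding tK unfolding K0_def by (simp add: mm_sub_r mm_sub_l matrix_mul_lid matrix_mul_rid matrix_mul_assoc)
  have "tr (W ** N0) = tr N0 ** W" by (simp add: matrix_transpose_mul sym)
  also have "\<dots> = tr N0 ** W ** (K0 ** N0)" using K0N0 by (simp add: K0_def matrix_mul_rid)
  also have "\<dots> = tr N0 ** (tr K0 ** W) ** N0" by (simp add: c matrix_mul_assoc)
  also have "\<dots> = tr (K0 ** N0) ** W ** N0" by (simp add: matrix_transpose_mul matrix_mul_assoc)
  also have "\<dots> = W ** N0" using K0N0 by (simp add: K0_def matrix_mul_lid)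
  finally show ?thesis .
qed

lemma mr_shift:
  assumes "0 \<le> x" "0 \<le> s" "0 \<le> u"
  shows "mr u (x - min (ereal s) x) = mr (u + s) x - mr s x"
  using assms by (cases x) (auto simp: mr_def min_def)

lemma ind_shift:
  assumes "0 \<le> x" "0 \<le> s" "0 \<le> u"
  shows "(ereal u < x - min (ereal s) x) \<longleftrightarrow> (ereal (u + s) < x)"
  using assms by (cases x) (auto simp: min_def)

lemma mr_cases:
  assumes "0 \<le> x" "0 \<le> s" "0 \<le> t"
  shows "mr s x = s \<or> mr (t + s) x = mr s x"
  using assms by (cases x) (auto simp: mr_def min_def)

lemma shift_int:
  fixes f :: "real \<Rightarrow> real"
  assumes "f integrable_on {s..t+s}"
  shows "((\<lambda>u. f (u + s)) has_integral integral {s..t+s} f) {0..t}"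
proof -
  have "(f has_integral integral {s..t+s} f) (cbox s (t+s))"
    using assms by (simp add: cbox_interval has_integral_integral)
  from has_integral_affinity'[OF this, of 1 s]
  show ?thesis by (simp add: cbox_interval add.commute)
qed


theorem mainTheorem9:
  fixes W :: "real^'n^'n" and \<theta> \<eta> :: "real^'n"
    and B X :: "real \<Rightarrow> real^'n" and s :: real
  assumes "symmetric_nonneg W" and "irreducible_mat W"
    and "\<forall>i. 0 \<le> \<theta> $ i" and "\<forall>i. 0 \<le> \<eta> $ i"
    and "continuous_on UNIV B"
    and "sde_solution W \<theta> \<eta> B X"
    and "0 \<le> s"
  shows "let Ts = tmin s (hit X);
             Wt = W ** matrix_inv (Kmat W Ts);
             et = \<eta> + Wt *v (dmat Ts *v \<eta>)
         in sde_solution Wt (X s) et (\<lambda>t. B (s + t) - B s) (\<lambda>t. X (t + s))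
            \<and> (\<forall>i. hit (\<lambda>t. X (t + s)) i = hit X i - min (ereal s) (hit X i))"
proof -
  note sol = assms(6)
  have s0: "0 \<le> s" by fact
  have cont: "continuous_on {0..} X" using sol by (simp add: sde_solution_def)
  have invK: "\<And>t. 0 \<le> t \<Longrightarrow> invertible (Kmat W (tmin t (hit X)))"
    using sol by (simp add: sde_solution_def)
  have Wnn: "nn W" using assms(1) by (simp add: symmetric_nonneg_def nn_def)
  have Wsym: "tr W = W" using assms(1) by (simp add: symmetric_nonneg_def vec_eq_iff tr_nth)
  have eta0: "\<And>i. 0 \<le> \<eta> $ i" using assms(4) by simp
  define T where "T = hit X"
  have T0: "\<And>i. 0 \<le> T i" by (simp add: T_def hit_ge0)
  define X' where "X' = (\<lambda>t. X (t + s))"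
  define T' where "T' = hit X'"
  have hs: "\<And>i. T' i = T i - min (ereal s) (T i)"
    unfolding T'_def T_def X'_def using hit_shift[OF sol cont s0] by blast
  define d where "d t = tmin t T" for t
  define d0 where "d0 = d s"
  define K0 where "K0 = Kmat W d0"
  define N0 where "N0 = matrix_inv K0"
  have K0i: "invertible K0" using invK[OF s0] by (simp add: K0_def d0_def d_def T_def)
  note K0N0 = inv_props(1)[OF K0i, folded N0_def] and N0K0 = inv_props(2)[OF K0i, folded N0_def]
  have nnN0: "nn N0"
  proof -
    have "nn (matrix_inv (mat 1 - dmat (d s) ** W))"
    proof (rule path_nonneg[OF Wnn])
      show "d 0 = 0" by (simp add: d_def vec_eq_iff tmin_nth mr_zero T0)
      show "0 \<le> d t' $ i - d t $ i \<and> d t' $ i - d t $ i \<le> t' - t" if "0 \<le> t" "t \<le> t'" for t t' i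
        using mr_mono[OF T0 that] by (simp add: d_def tmin_nth)
      show "invertible (mat 1 - dmat (d t) ** W)" if "0 \<le> t" for t
        using invK[OF that] by (simp add: d_def Kmat_def T_def)
    qed (rule s0)
    then show ?thesis by (simp add: N0_def K0_def Kmat_def d0_def)
  qed
  define Wt where "Wt = W ** N0"
  define et where "et = \<eta> + Wt *v (dmat d0 *v \<eta>)"
  have d0nn: "\<And>i. 0 \<le> d0 $ i" using mr_bounds[OF T0 s0] by (simp add: d0_def d_def tmin_nth)
  have delta: "tmin u T' = d (u + s) - d0" if "0 \<le> u" for u
    using mr_shift[OF T0 s0 that] by (simp add: vec_eq_iff tmin_nth hs d_def d0_def)
  have dsum: "d0 + tmin u T' = d (u + s)" if "0 \<le> u" for u
    using delta[OF that] by simp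
  have psi_eq: "Wt *v psi Wt et X' u + et = W *v psi W \<eta> X (u + s) + \<eta>" if u0: "0 \<le> u" for u
  proof -
    define \<delta> where "\<delta> = tmin u T'"
    define K where "K = Kmat W (d0 + \<delta>)"
    have Ki: "invertible K" using invK[of "u + s"] u0 s0 dsum[OF u0]
      by (simp add: K_def \<delta>_def d_def T_def)
    define N where "N = matrix_inv K"
    note KN = inv_props(1)[OF Ki, folded N_def] and NK = inv_props(2)[OF Ki, folded N_def]
    note A = alg_main[OF K0_def K_def K0N0 N0K0 KN NK]
    have inv': "matrix_inv (Kmat Wt \<delta>) = K0 ** N"
      using A(2) by (simp add: Wt_def inv_unique)
    have "psi Wt et X' u = matrix_inv (Kmat Wt (tmin u T')) *v (X' u + dmat (tmin u T') *v et)"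
      by (simp add: psi_def T'_def)
    also have "\<dots> = (K0 ** N) *v (X (u + s) + dmat \<delta> *v et)"
      using inv' by (simp add: \<delta>_def X'_def)
    finally have "psi Wt et X' u = (K0 ** N) *v (X (u + s) + dmat \<delta> *v et)" .
    moreover have "psi W \<eta> X (u + s) = N *v (X (u + s) + dmat (d0 + \<delta>) *v \<eta>)"
      using dsum[OF u0] by (simp add: psi_def N_def K_def \<delta>_def d_def T_def)
    ultimately show ?thesis using A(3)[of "X (u + s)" \<eta>] by (simp add: Wt_def et_def)
  qed
  have N0i: "invertible N0" unfolding invertible_def using N0K0 K0N0 by blast
  have G5: "(\<lambda>u. if ereal u < hit X' i then (Wt *v psi Wt et X' u) $ i + et $ i else 0) integrable_on {0..t}
     \<and> X' t $ i = X s $ i + ((B (s + tmin t (hit X') $ i) - B s) $ i - (B (s + 0) - B s) $ i)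
        - integral {0..t} (\<lambda>u. if ereal u < hit X' i then (Wt *v psi Wt et X' u) $ i + et $ i else 0)"
    if t0: "0 \<le> t" for t i
  proof -
    define f where "f = (\<lambda>u. if ereal u < hit X i then (W *v psi W \<eta> X u) $ i + \<eta> $ i else 0)"
    define g where "g = (\<lambda>u. if ereal u < hit X' i then (Wt *v psi Wt et X' u) $ i + et $ i else 0)"
    have fg: "g u = f (u + s)" if u0: "0 \<le> u" for u
    proof -
      have c: "(Wt *v psi Wt et X' u + et) $ i = (W *v psi W \<eta> X (u + s) + \<eta>) $ i"
        using psi_eq[OF u0] by simp
      show ?thesis using ind_shift[OF T0 s0 u0, of i] c hs[of i]
        by (simp add: f_def g_def T'_def[symmetric] T_def[symmetric])
    qed
    have fint: "f integrable_on {0..t+s}" using sde_eq(2)[OF sol, of "t+s" i] t0 s0 by (simp add: f_def)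
    have fint2: "f integrable_on {s..t+s}" by (rule integrable_on_subinterval[OF fint]) (use s0 in auto)
    have gint: "(g has_integral integral {s..t+s} f) {0..t}"
      by (rule has_integral_eq[OF _ shift_int[OF fint2]]) (simp add: fg)
    have gI: "integral {0..t} g = integral {s..t+s} f" using gint by (rule integral_unique)
    have E1: "X (t+s) $ i = \<theta> $ i + (B (tmin (t+s) (hit X) $ i) $ i - B 0 $ i) - integral {0..t+s} f"
      using sde_eq(1)[OF sol, of "t+s" i] t0 s0 by (simp add: f_def)
    have E2: "X s $ i = \<theta> $ i + (B (tmin s (hit X) $ i) $ i - B 0 $ i) - integral {0..s} f"
      using sde_eq(1)[OF sol, of s i] s0 by (simp add: f_def)
    have comb: "integral {0..s} f + integral {s..t+s} f = integral {0..t+s} f"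
      by (rule Henstock_Kurzweil_Integration.integral_combine[OF s0 _ fint]) (use t0 in simp)
    have dl: "tmin t T' $ i = mr (t+s) (T i) - mr s (T i)"
      using delta[OF t0] by (simp add: d_def d0_def tmin_nth)
    have Bs: "B (s + tmin t T' $ i) $ i - B s $ i = B (tmin (t+s) T $ i) $ i - B (tmin s T $ i) $ i"
      using mr_cases[OF T0 s0 t0, of i] dl by (auto simp: tmin_nth)
    have "g integrable_on {0..t}" using gint by blast
    moreover have "X' t $ i = X s $ i + ((B (s + tmin t (hit X') $ i) - B s) $ i - (B (s + 0) - B s) $ i)
        - integral {0..t} g"
    proof -
      have xt: "X' t $ i = X (t + s) $ i" by (simp add: X'_def)
      show ?thesis unfolding T'_def[symmetric] xt using E1 E2 comb gI Bs
        by (simp add: T_def[symmetric])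
    qed
    ultimately show ?thesis by (simp add: g_def)
  qed
  have part1: "sde_solution Wt (X s) et (\<lambda>t. B (s + t) - B s) X'"
    unfolding sde_solution_def
  proof (intro conjI)
    show "symmetric_nonneg Wt"
    proof -
      have "tr Wt = Wt" unfolding Wt_def
        by (rule sym_lemma[OF Wsym]) (use K0N0 in \<open>simp add: K0_def Kmat_def\<close>)
      moreover have "nn Wt" unfolding Wt_def by (rule nn_mult[OF Wnn nnN0])
      ultimately show ?thesis
        by (auto simp: symmetric_nonneg_def nn_def vec_eq_iff tr_nth)
    qed
  next
    show "\<forall>i. 0 \<le> X s $ i \<and> 0 \<le> et $ i"
    proof
      fix i
      have "nn Wt" unfolding Wt_def by (rule nn_mult[OF Wnn nnN0])
      have v: "\<And>k. 0 \<le> (dmat d0 *v \<eta>) $ k" using eta0 d0nn by (simp add: dmat_vec)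
      have "0 \<le> (Wt *v (dmat d0 *v \<eta>)) $ i" unfolding matrix_vector_mult_def[of Wt]
        using \<open>nn Wt\<close> v by (auto simp: nn_def intro!: sum_nonneg)
      then show "0 \<le> X s $ i \<and> 0 \<le> et $ i" using eta0[of i] X_nonneg[OF sol cont s0, of i]
        by (simp add: et_def)
    qed
  next
    show "continuous_on {0..} X'" unfolding X'_def
      by (rule continuous_on_compose2[OF cont]) (use s0 in \<open>auto intro!: continuous_intros\<close>)
  next
    show "\<forall>t\<ge>0. invertible (Kmat Wt (tmin t (hit X')))"
    proof (intro allI impI)
      fix t :: real assume t0: "0 \<le> t"
      define \<delta> where "\<delta> = tmin t T'"
      define K where "K = Kmat W (d0 + \<delta>)"
      have Ki: "invertible K" using invK[of "t + s"] t0 s0 dsum[OF t0]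
        by (simp add: K_def \<delta>_def d_def T_def)
      define N where "N = matrix_inv K"
      note KN = inv_props(1)[OF Ki, folded N_def] and NK = inv_props(2)[OF Ki, folded N_def]
      note A = alg_main[OF K0_def K_def K0N0 N0K0 KN NK]
      show "invertible (Kmat Wt (tmin t (hit X')))"
        using A(1) invertible_mult[OF Ki N0i] by (simp add: Wt_def T'_def[symmetric] \<delta>_def)
    qed
  qed (use G5 in simp)
  show ?thesis unfolding Let_def
    using part1[unfolded Wt_def et_def N0_def K0_def d0_def d_def T_def X'_def]
      hs[unfolded T'_def X'_def T_def] by blast
qed

end
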